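(* Let $P_n=\{0,1,2,3\}^n$ with order $\le_n$ and $p^m_k$ restriction to the first $k$ coordinates, let $\mathbb{P}$ be their inverse limit and $\mathbb{O}(\mathbb{P})$ the associated limit of order ideals. For $n\in\mathbb{N}$ let $T_n=\{c\in\{0,1,2,3\}^n:c(0)\in\{0,1\}\}$ and let $q^{n+1}_n:\{0,1,2\}^{T_{n+1}}\to\{0,1,2\}^{T_n}$ be given by $q^{n+1}_n(f)(c)=\max\{f(c^\frown0),f(c^\frown1),\min\{f(c^\frown2),1\},2\min\{f(c^\frown3),1\}\}$, with $q^n_k=q^{k+1}_k\circ\dots\circ q^n_{n-1}$. Then $\mathbb{O}(\mathbb{P})$ is order-isomorphic (hence lattice-isomorphic) to the inverse limit $\{(f_n)\in\prod_n\{0,1,2\}^{T_n}:q^{n+1}_n(f_{n+1})=f_n\ \forall n\}$ with the coordinatewise (pointwise) order.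
   Context: $x\le_n y$ iff $x=y$ or (i) there is $l<n$ with $x(k)=y(k)$ for $k<l$, $x(l)=2$, $y(l)=3$, and $x(k)=y(k)\in\{0,1\}$ for $l<k<n$; or (ii) $x(0)=0$, $y(0)=1$ and $x(k)=y(k)\in\{0,1\}$ for $1\le k<n$. $c^\frown i$ denotes the sequence $c$ extended by $i$. $\mathcal{O}(P_n)$ is the set of down-sets of $P_n$ under inclusion, $\downarrow x=\{m:m\le x\}$; for a quotient map $p:Q\to R$ of finite posets, $\hat p(\emptyset)=\emptyset$ and $\hat p(A)=\bigcup_i\downarrow p(a_i)$ over the maximal elements $a_i$ of $A$; $\mathbb{O}(\mathbb{P})=\{(A_n)\in\prod_n\mathcal{O}(P_n):\widehat{p^{n+1}_n}(A_{n+1})=A_n\ \forall n\}$ ordered coordinatewise by inclusion. *)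

theory Defs
  imports Main
begin

text \<open>Sequences in P_n = {0,1,2,3}^n are lists of naturals of length n with entries < 4;
  the coordinate x(k) is x ! k (0-indexed).\<close>

definition Pn :: "nat \<Rightarrow> nat list set" where
  "Pn n = {x. length x = n \<and> (\<forall>k<n. x ! k < 4)}"

definition leqn :: "nat \<Rightarrow> nat list \<Rightarrow> nat list \<Rightarrow> bool" where
  "leqn n x y \<longleftrightarrow> x = y
     \<or> (\<exists>l<n. (\<forall>k<l. x ! k = y ! k) \<and> x ! l = 2 \<and> y ! l = 3
              \<and> (\<forall>k. l < k \<and> k < n \<longrightarrow> x ! k = y ! k \<and> x ! k \<in> {0,1}))
     \<or> (0 < n \<and> x ! 0 = 0 \<and> y ! 0 = 1
              \<and> (\<forall>k. 1 \<le> k \<and> k < n \<longrightarrow> x ! k = y ! k \<and> x ! k \<in> {0,1}))"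

definition downsets :: "nat \<Rightarrow> nat list set set" where
  "downsets n = {A. A \<subseteq> Pn n \<and> (\<forall>a\<in>A. \<forall>m\<in>Pn n. leqn n m a \<longrightarrow> m \<in> A)}"

definition downarrow :: "nat \<Rightarrow> nat list \<Rightarrow> nat list set" where
  "downarrow n x = {m \<in> Pn n. leqn n m x}"

definition maxels :: "nat \<Rightarrow> nat list set \<Rightarrow> nat list set" where
  "maxels n A = {a \<in> A. \<forall>b\<in>A. leqn n a b \<longrightarrow> b = a}"

definition hatp :: "nat \<Rightarrow> nat list set \<Rightarrow> nat list set" where
  "hatp n A = (\<Union>a\<in>maxels (Suc n) A. downarrow n (take n a))"

definition OP :: "(nat \<Rightarrow> nat list set) set" where
  "OP = {A. (\<forall>n. A n \<in> downsets n) \<and> (\<forall>n. hatp n (A (Suc n)) = A n)}"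

definition Tn :: "nat \<Rightarrow> nat list set" where
  "Tn n = {c \<in> Pn n. 0 < n \<and> c ! 0 \<in> {0,1}}"

text \<open>Elements of {0,1,2}^{T_n}, represented as functions that are 0 outside T_n.\<close>
definition Fn :: "nat \<Rightarrow> (nat list \<Rightarrow> nat) set" where
  "Fn n = {f. (\<forall>c\<in>Tn n. f c \<le> 2) \<and> (\<forall>c. c \<notin> Tn n \<longrightarrow> f c = 0)}"

definition q :: "nat \<Rightarrow> (nat list \<Rightarrow> nat) \<Rightarrow> (nat list \<Rightarrow> nat)" where
  "q n f = (\<lambda>c. if c \<in> Tn n then
      max (max (f (c @ [0])) (f (c @ [1])))
          (max (min (f (c @ [2])) 1) (2 * min (f (c @ [3])) 1))
    else 0)"

definition Lq :: "(nat \<Rightarrow> nat list \<Rightarrow> nat) set" where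
  "Lq = {F. (\<forall>n. F n \<in> Fn n) \<and> (\<forall>n. q n (F (Suc n)) = F n)}"

end

theory Submission
  imports Defs
begin

fun lu :: "bool \<Rightarrow> nat list \<Rightarrow> nat list" where
"lu b [] = []" |
"lu b [i] = [2*i + (if b then 1 else 0)]" |
"lu b (i # j # r) = (if i < 2 then i # lu b (j#r) else (if b then 3 else 2) # lu (i=3) (j#r))"

definition ch :: "bool \<Rightarrow> nat list \<Rightarrow> nat list" where "ch b c = rev (lu b (rev c))"

lemma length_lu: "length (lu b c) = length c"
  by (induction b c rule: lu.induct) auto

lemma length_ch[simp]: "length (ch b c) = length c"
  by (simp add: ch_def length_lu)

lemma ch_single: "ch b [i] = [2*i + (if b then 1 else 0)]"
  by (simp add: ch_def)

lemma ch_snoc: "c \<noteq> [] \<Longrightarrow> ch b (c@[i]) = ch (if i<2 then b else i=3) c @ [if i<2 then i else (if b then 3 else 2)]"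
  by (cases "rev c") (auto simp: ch_def)

lemma Pn_snoc: "(m@[i] \<in> Pn (Suc n)) = (m \<in> Pn n \<and> i < 4)"
  unfolding Pn_def by (auto simp: nth_append less_Suc_eq split: if_splits)

lemma Pn_Suc: "z \<in> Pn (Suc n) \<Longrightarrow> \<exists>m i. z = m@[i] \<and> m \<in> Pn n \<and> i < 4"
proof -
  assume z: "z \<in> Pn (Suc n)"
  then have "z \<noteq> []" by (auto simp: Pn_def)
  then obtain m i where "z = m @ [i]" by (metis rev_exhaust)
  with z show ?thesis by (auto simp: Pn_snoc)
qed

lemma Pn_0: "Pn 0 = {[]}" by (auto simp: Pn_def)
lemma Tn_0: "Tn 0 = {}" by (auto simp: Tn_def)
lemma Pn_len: "z \<in> Pn n \<Longrightarrow> length z = n" by (auto simp: Pn_def)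
lemma Tn_Pn: "c \<in> Tn n \<Longrightarrow> c \<in> Pn n" by (auto simp: Tn_def)
lemma Tn_pos: "c \<in> Tn n \<Longrightarrow> 0 < n" by (auto simp: Tn_def)

lemma Tn_snoc: "0 < n \<Longrightarrow> (c@[i] \<in> Tn (Suc n)) = (c \<in> Tn n \<and> i < 4)"
  unfolding Tn_def using Pn_len by (auto simp: Pn_snoc nth_append)

lemma Tn_Suc: "0 < n \<Longrightarrow> z \<in> Tn (Suc n) \<Longrightarrow> \<exists>c i. z = c@[i] \<and> c \<in> Tn n \<and> i < 4"
proof -
  assume n: "0 < n" and z: "z \<in> Tn (Suc n)"
  then have "z \<noteq> []" by (auto simp: Tn_def Pn_def)
  then obtain m i where "z = m @ [i]" by (metis rev_exhaust)
  with z n show ?thesis by (auto simp: Tn_snoc)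
qed

lemma Pn_1: "z \<in> Pn 1 \<longleftrightarrow> (\<exists>i<4. z = [i])"
proof
  assume "z \<in> Pn 1"
  then show "\<exists>i<4. z = [i]" by (cases z) (auto simp: Pn_def)
qed (auto simp: Pn_def)

lemma Tn_1: "z \<in> Tn 1 \<longleftrightarrow> z = [0] \<or> z = [1]"
  unfolding Tn_def mem_Collect_eq Pn_1 by auto

lemma leqn_refl: "leqn n x x" by (simp add: leqn_def)

lemma leqn_1: "leqn 1 [i] [j] \<longleftrightarrow> i = j \<or> (i = 2 \<and> j = 3) \<or> (i = 0 \<and> j = 1)"
  unfolding leqn_def by auto


lemma leqn_snoc:
  assumes lm: "length m = n" and lz: "length z = n" and n: "0 < n"
  shows "leqn (Suc n) (m@[i]) (z@[j]) \<longleftrightarrow> (m = z \<and> i = j) \<or> (m = z \<and> i = 2 \<and> j = 3) \<or> (i = j \<and> i < 2 \<and> leqn n m z)"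
proof -
  have am: "\<And>k. k < n \<Longrightarrow> (m@[i])!k = m!k" using lm by (simp add: nth_append)
  have az: "\<And>k. k < n \<Longrightarrow> (z@[j])!k = z!k" using lz by (simp add: nth_append)
  have bm: "(m@[i])!n = i" using lm by (auto simp: nth_append)
  have bz: "(z@[j])!n = j" using lz by (auto simp: nth_append)
  show ?thesis
  proof
    assume L: "leqn (Suc n) (m@[i]) (z@[j])"
    show "(m = z \<and> i = j) \<or> (m = z \<and> i = 2 \<and> j = 3) \<or> (i = j \<and> i < 2 \<and> leqn n m z)"
      using L[unfolded leqn_def]
    proof (elim disjE exE conjE)
      assume "m @ [i] = z @ [j]" then show ?thesis by simp
    next
      fix l assume l: "l < Suc n" and h1: "\<forall>k<l. (m @ [i]) ! k = (z @ [j]) ! k"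
        and h2: "(m @ [i]) ! l = 2" and h3: "(z @ [j]) ! l = 3"
        and h4: "\<forall>k. l < k \<and> k < Suc n \<longrightarrow> (m @ [i]) ! k = (z @ [j]) ! k \<and> (m @ [i]) ! k \<in> {0, 1}"
      show ?thesis
      proof (cases "l = n")
        case True
        have "m = z"
          by (rule nth_equalityI) (use lm lz h1 True am az in auto)
        then show ?thesis using h2 h3 True bm bz by simp
      next
        case False
        then have ln: "l < n" using l by simp
        have ij: "i = j \<and> i < 2" using h4[rule_format, of n] ln bm bz by auto
        have "leqn n m z" unfolding leqn_def
          apply (rule disjI2, rule disjI1)
          apply (rule exI[of _ l])
          using ln h1 h2 h3 h4 am az by auto
        then show ?thesis using ij by simp
      qed
    next
      assume h2: "(m @ [i]) ! 0 = 0" and h3: "(z @ [j]) ! 0 = 1"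
        and h4: "\<forall>k. 1 \<le> k \<and> k < Suc n \<longrightarrow> (m @ [i]) ! k = (z @ [j]) ! k \<and> (m @ [i]) ! k \<in> {0, 1}"
      have ij: "i = j \<and> i < 2" using h4[rule_format, of n] n bm bz by auto
      have "leqn n m z" unfolding leqn_def
        apply (rule disjI2, rule disjI2)
        using n h2 h3 h4 am az by auto
      then show ?thesis using ij by simp
    qed
  next
    assume R: "(m = z \<and> i = j) \<or> (m = z \<and> i = 2 \<and> j = 3) \<or> (i = j \<and> i < 2 \<and> leqn n m z)"
    then show "leqn (Suc n) (m@[i]) (z@[j])"
    proof (elim disjE conjE)
      assume "m = z" "i = j" then show ?thesis by (simp add: leqn_def)
    next
      assume e: "m = z" "i = 2" "j = 3"
      show ?thesis unfolding leqn_def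
        apply (rule disjI2, rule disjI1)
        apply (rule exI[of _ n])
        using e am az bm bz by auto
    next
      assume ij: "i = j" "i < 2" and L: "leqn n m z"
      show ?thesis using L[unfolded leqn_def]
      proof (elim disjE exE conjE)
        assume "m = z" then show ?thesis using ij by (simp add: leqn_refl)
      next
        fix l assume l: "l < n" and h1: "\<forall>k<l. m ! k = z ! k"
          and h2: "m ! l = 2" and h3: "z ! l = 3"
          and h4: "\<forall>k. l < k \<and> k < n \<longrightarrow> m ! k = z ! k \<and> m ! k \<in> {0, 1}"
        show ?thesis unfolding leqn_def
          apply (rule disjI2, rule disjI1)
          apply (rule exI[of _ l])
          using l h1 h2 h3 h4 am az bm bz ij by (auto simp: less_Suc_eq)
      next
        assume h2: "m ! 0 = 0" and h3: "z ! 0 = 1"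
          and h4: "\<forall>k. 1 \<le> k \<and> k < n \<longrightarrow> m ! k = z ! k \<and> m ! k \<in> {0, 1}"
        show ?thesis unfolding leqn_def
          apply (rule disjI2, rule disjI2)
          using n h2 h3 h4 am az bm bz ij by (auto simp: less_Suc_eq)
      qed
    qed
  qed
qed


lemma Tn_1': "z \<in> Tn (Suc 0) \<longleftrightarrow> z = [0] \<or> z = [1]" using Tn_1 by simp
lemma Tn_1_eq: "Tn (Suc 0) = {[0],[1]}" using Tn_1' by auto
lemma Pn_1': "z \<in> Pn (Suc 0) \<longleftrightarrow> (\<exists>i<4. z = [i])" using Pn_1 by simp
lemma leqn_1': "leqn (Suc 0) [i] [j] \<longleftrightarrow> i = j \<or> (i = 2 \<and> j = 3) \<or> (i = 0 \<and> j = 1)"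
  using leqn_1 by simp

lemma ch_Pn: "c \<in> Tn n \<Longrightarrow> ch b c \<in> Pn n"
proof (induction n arbitrary: c b)
  case 0 then show ?case using Tn_pos by auto
next
  case (Suc n)
  show ?case
  proof (cases "n = 0")
    case True then show ?thesis using Suc.prems by (auto simp: Tn_1' Pn_1' ch_single)
  next
    case False
    then have n: "0 < n" by simp
    obtain c' i where c: "c = c'@[i]" "c' \<in> Tn n" "i < 4" using Tn_Suc[OF n Suc.prems] by blast
    have ne: "c' \<noteq> []" using c(2) by (auto simp: Tn_def Pn_def)
    have "ch (if i<2 then b else i=3) c' \<in> Pn n" by (rule Suc.IH[OF c(2)])
    then show ?thesis using c ne by (simp add: ch_snoc Pn_snoc)
  qed
qed

lemma ch_inj: "c \<in> Tn n \<Longrightarrow> c' \<in> Tn n \<Longrightarrow> ch b c = ch b' c' \<Longrightarrow> b = b' \<and> c = c'"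
proof (induction n arbitrary: c c' b b')
  case 0 then show ?case using Tn_pos by auto
next
  case (Suc n)
  show ?case
  proof (cases "n = 0")
    case True
    then have "c = [0] \<or> c = [1]" "c' = [0] \<or> c' = [1]" using Suc.prems by (simp_all add: Tn_1')
    then show ?thesis using Suc.prems(3)
      by (elim disjE; cases b; cases b'; simp add: ch_single)
  next
    case False
    then have n: "0 < n" by simp
    obtain d i where c: "c = d@[i]" "d \<in> Tn n" "i < 4" using Tn_Suc[OF n Suc.prems(1)] by blast
    obtain d' i' where c': "c' = d'@[i']" "d' \<in> Tn n" "i' < 4" using Tn_Suc[OF n Suc.prems(2)] by blast
    have ne: "d \<noteq> []" "d' \<noteq> []" using c(2) c'(2) by (auto simp: Tn_def Pn_def)
    let ?B = "if i<2 then b else i=3" and ?B' = "if i'<2 then b' else i'=3"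
    let ?K = "if i<2 then i else (if b then 3 else 2)" and ?K' = "if i'<2 then i' else (if b' then 3 else 2)"
    have "ch b c = ch ?B d @ [?K]" using ne by (simp add: c ch_snoc)
    moreover have "ch b' c' = ch ?B' d' @ [?K']" using ne by (simp add: c' ch_snoc)
    ultimately have "ch ?B d @ [?K] = ch ?B' d' @ [?K']" using Suc.prems(3) by simp
    then have e: "ch ?B d = ch ?B' d'" and k: "?K = ?K'" by simp_all
    from Suc.IH[OF c(2) c'(2) e] have B: "?B = ?B'" and d: "d = d'" by auto
    show ?thesis
    proof (cases "i < 2")
      case True
      then have "i' < 2" using k by (cases "i' < 2"; cases b'; simp)
      then show ?thesis using True B k d c c' by simp
    next
      case False
      then have "\<not> i' < 2" using k by (cases "i' < 2"; cases b; simp)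
      then show ?thesis using False B k d c c' c(3) c'(3)
        by (cases b; cases b'; auto)
    qed
  qed
qed

lemma ch_surj: "z \<in> Pn n \<Longrightarrow> 0 < n \<Longrightarrow> \<exists>c\<in>Tn n. \<exists>b. z = ch b c"
proof (induction n arbitrary: z)
  case 0 then show ?case by auto
next
  case (Suc n)
  show ?case
  proof (cases "n = 0")
    case True
    then obtain i where i: "i < 4" "z = [i]" using Pn_1' Suc.prems by auto
    show ?thesis
      apply (rule bexI[of _ "[i div 2]"], rule exI[of _ "odd i"])
      using i True by (auto simp: Tn_1' ch_single)
  next
    case False
    then have n: "0 < n" by simp
    obtain m i where z: "z = m@[i]" "m \<in> Pn n" "i < 4" using Pn_Suc[OF Suc.prems(1)] by blast
    then obtain c b where c: "c \<in> Tn n" "m = ch b c" using Suc.IH[OF z(2) n] by blast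
    have ne: "c \<noteq> []" using c(1) by (auto simp: Tn_def Pn_def)
    show ?thesis
    proof (cases "i < 2")
      case True
      show ?thesis
        apply (rule bexI[of _ "c@[i]"], rule exI[of _ b])
        using True ne c z n by (auto simp: ch_snoc Tn_snoc)
    next
      case False
      show ?thesis
        apply (rule bexI[of _ "c@[if b then 3 else 2]"], rule exI[of _ "i = 3"])
        using False ne c z n by (auto simp: ch_snoc Tn_snoc)
    qed
  qed
qed

lemma leqn_char: "m \<in> Pn n \<Longrightarrow> z \<in> Pn n \<Longrightarrow> 0 < n \<Longrightarrow>
   leqn n m z \<longleftrightarrow> m = z \<or> (\<exists>c\<in>Tn n. m = ch False c \<and> z = ch True c)"
proof (induction n arbitrary: m z)
  case 0 then show ?case by auto
next
  case (Suc n)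
  show ?case
  proof (cases "n = 0")
    case True
    then obtain i j where i: "i < 4" "m = [i]" "j < 4" "z = [j]" using Pn_1' Suc.prems by blast
    show ?thesis using i True by (auto simp: Tn_1_eq ch_single leqn_1')
  next
    case False
    then have n: "0 < n" by simp
    obtain m' i where m: "m = m'@[i]" "m' \<in> Pn n" "i < 4" using Pn_Suc Suc.prems by blast
    obtain z' j where z: "z = z'@[j]" "z' \<in> Pn n" "j < 4" using Pn_Suc Suc.prems by blast
    have IH: "leqn n m' z' \<longleftrightarrow> m' = z' \<or> (\<exists>c\<in>Tn n. m' = ch False c \<and> z' = ch True c)"
      using Suc.IH m z n by blast
    have L: "leqn (Suc n) m z \<longleftrightarrow> (m' = z' \<and> i = j) \<or> (m' = z' \<and> i = 2 \<and> j = 3) \<or> (i = j \<and> i < 2 \<and> leqn n m' z')"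
      using leqn_snoc[OF Pn_len[OF m(2)] Pn_len[OF z(2)] n] m z by simp
    show ?thesis
    proof
      assume "leqn (Suc n) m z"
      then consider "m' = z' \<and> i = j" | "m' = z' \<and> i = 2 \<and> j = 3"
        | c where "i = j" "i < 2" "c \<in> Tn n" "m' = ch False c" "z' = ch True c"
        using L IH by blast
      then show "m = z \<or> (\<exists>c\<in>Tn (Suc n). m = ch False c \<and> z = ch True c)"
      proof cases
        case 1 then show ?thesis using m z by simp
      next
        case 2
        obtain c b where c: "c \<in> Tn n" "m' = ch b c" using ch_surj m(2) n by blast
        have ne: "c \<noteq> []" using c(1) by (auto simp: Tn_def Pn_def)
        show ?thesis
          apply (rule disjI2, rule bexI[of _ "c@[if b then 3 else 2]"])
          using 2 ne c m z n by (auto simp: ch_snoc Tn_snoc)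
      next
        case (3 c)
        have ne: "c \<noteq> []" using 3 by (auto simp: Tn_def Pn_def)
        show ?thesis
          apply (rule disjI2, rule bexI[of _ "c@[i]"])
          using 3 ne m z n by (auto simp: ch_snoc Tn_snoc)
      qed
    next
      assume "m = z \<or> (\<exists>c\<in>Tn (Suc n). m = ch False c \<and> z = ch True c)"
      then show "leqn (Suc n) m z"
      proof
        assume "m = z" then show ?thesis by (simp add: leqn_refl)
      next
        assume "\<exists>c\<in>Tn (Suc n). m = ch False c \<and> z = ch True c"
        then obtain c' where c': "c' \<in> Tn (Suc n)" "m = ch False c'" "z = ch True c'" by blast
        then obtain c k where c: "c' = c@[k]" "c \<in> Tn n" "k < 4" using Tn_Suc n by blast
        have ne: "c \<noteq> []" using c by (auto simp: Tn_def Pn_def)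
        have lc: "length (ch b c) = n" for b using Pn_len[OF Tn_Pn[OF c(2)]] by simp
        show ?thesis
        proof (cases "k < 2")
          case True
          then have "m' = ch False c" "z' = ch True c" "i = k" "j = k"
            using c' c ne m z lc by (auto simp: ch_snoc)
          then show ?thesis using L IH True c by blast
        next
          case False
          then have "m' = z'" "i = 2" "j = 3"
            using c' c ne m z lc by (auto simp: ch_snoc)
          then show ?thesis using L by blast
        qed
      qed
    qed
  qed
qed


definition psi :: "nat \<Rightarrow> nat list set \<Rightarrow> nat list \<Rightarrow> nat" where
"psi n A c = (if c \<in> Tn n then (if ch True c \<in> A then 2 else if ch False c \<in> A then 1 else 0) else 0)"

definition psinv :: "nat \<Rightarrow> (nat list \<Rightarrow> nat) \<Rightarrow> nat list set" where
"psinv n f = {z \<in> Pn n. \<exists>c\<in>Tn n. (z = ch False c \<and> 1 \<le> f c) \<or> (z = ch True c \<and> 2 \<le> f c)}"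

lemma leqn_trans:
  assumes "m \<in> Pn n" "x \<in> Pn n" "y \<in> Pn n" "leqn n m x" "leqn n x y"
  shows "leqn n m y"
proof (cases "n = 0")
  case True then show ?thesis using assms by (simp add: Pn_0 leqn_refl)
next
  case False
  then have n: "0 < n" by simp
  have 1: "m = x \<or> (\<exists>c\<in>Tn n. m = ch False c \<and> x = ch True c)" using leqn_char[OF assms(1,2) n] assms(4) by blast
  have 2: "x = y \<or> (\<exists>c\<in>Tn n. x = ch False c \<and> y = ch True c)" using leqn_char[OF assms(2,3) n] assms(5) by blast
  show ?thesis
  proof (cases "m = x \<or> x = y")
    case True then show ?thesis using assms by auto
  next
    case False
    then obtain c c' where "c \<in> Tn n" "c' \<in> Tn n" "x = ch True c" "x = ch False c'" using 1 2 by blast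
    then show ?thesis using ch_inj by blast
  qed
qed

lemma low_le_up: "c \<in> Tn n \<Longrightarrow> leqn n (ch False c) (ch True c)"
  using leqn_char[OF ch_Pn ch_Pn Tn_pos] by blast

lemma up_max: "c \<in> Tn n \<Longrightarrow> w \<in> Pn n \<Longrightarrow> leqn n (ch True c) w \<Longrightarrow> w = ch True c"
proof -
  assume c: "c \<in> Tn n" and w: "w \<in> Pn n" and l: "leqn n (ch True c) w"
  have "ch True c = w \<or> (\<exists>c'\<in>Tn n. ch True c = ch False c' \<and> w = ch True c')"
    using leqn_char[OF ch_Pn[OF c] w Tn_pos[OF c]] l by blast
  then show ?thesis using ch_inj c by blast
qed

lemma low_up: "c \<in> Tn n \<Longrightarrow> w \<in> Pn n \<Longrightarrow> leqn n (ch False c) w \<Longrightarrow> w = ch False c \<or> w = ch True c"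
proof -
  assume c: "c \<in> Tn n" and w: "w \<in> Pn n" and l: "leqn n (ch False c) w"
  have "ch False c = w \<or> (\<exists>c'\<in>Tn n. ch False c = ch False c' \<and> w = ch True c')"
    using leqn_char[OF ch_Pn[OF c] w Tn_pos[OF c]] l by blast
  then show ?thesis using ch_inj c by blast
qed

lemma down_step: "A \<in> downsets n \<Longrightarrow> c \<in> Tn n \<Longrightarrow> ch True c \<in> A \<Longrightarrow> ch False c \<in> A"
  unfolding downsets_def using low_le_up ch_Pn by blast

lemma downsets_Pn: "A \<in> downsets n \<Longrightarrow> A \<subseteq> Pn n"
  unfolding downsets_def by blast

lemma psi_Fn: "psi n A \<in> Fn n"
  unfolding Fn_def psi_def by auto

lemma psinv_psi:
  assumes n: "0 < n" and A: "A \<in> downsets n"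
  shows "psinv n (psi n A) = A"
proof
  show "psinv n (psi n A) \<subseteq> A"
  proof
    fix z assume "z \<in> psinv n (psi n A)"
    then obtain c where c: "c \<in> Tn n" and
      h: "(z = ch False c \<and> 1 \<le> psi n A c) \<or> (z = ch True c \<and> 2 \<le> psi n A c)"
      unfolding psinv_def by blast
    show "z \<in> A"
    proof (cases "ch True c \<in> A")
      case True then show ?thesis using h down_step[OF A c] by auto
    next
      case False then show ?thesis using h c by (auto simp: psi_def split: if_splits)
    qed
  qed
next
  show "A \<subseteq> psinv n (psi n A)"
  proof
    fix z assume z: "z \<in> A"
    then have zP: "z \<in> Pn n" using downsets_Pn[OF A] by blast
    then obtain c b where c: "c \<in> Tn n" "z = ch b c" using ch_surj n by blast
    show "z \<in> psinv n (psi n A)"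
      unfolding psinv_def using zP c z by (cases b) (auto simp: psi_def)
  qed
qed

lemma psinv_mem_T: "c \<in> Tn n \<Longrightarrow> ch True c \<in> psinv n f \<longleftrightarrow> 2 \<le> f c"
proof
  assume c: "c \<in> Tn n" and "ch True c \<in> psinv n f"
  then obtain c' where c': "c' \<in> Tn n" and
    h: "(ch True c = ch False c' \<and> 1 \<le> f c') \<or> (ch True c = ch True c' \<and> 2 \<le> f c')"
    unfolding psinv_def by blast
  then show "2 \<le> f c" using ch_inj[OF c c'] by blast
next
  assume "c \<in> Tn n" "2 \<le> f c"
  then show "ch True c \<in> psinv n f" unfolding psinv_def using ch_Pn by blast
qed

lemma psinv_mem_F: "c \<in> Tn n \<Longrightarrow> ch False c \<in> psinv n f \<longleftrightarrow> 1 \<le> f c"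
proof
  assume c: "c \<in> Tn n" and "ch False c \<in> psinv n f"
  then obtain c' where c': "c' \<in> Tn n" and
    h: "(ch False c = ch False c' \<and> 1 \<le> f c') \<or> (ch False c = ch True c' \<and> 2 \<le> f c')"
    unfolding psinv_def by blast
  then show "1 \<le> f c" using ch_inj[OF c c'] by blast
next
  assume "c \<in> Tn n" "1 \<le> f c"
  then show "ch False c \<in> psinv n f" unfolding psinv_def using ch_Pn by blast
qed

lemma psi_psinv: "f \<in> Fn n \<Longrightarrow> psi n (psinv n f) = f"
proof
  fix c assume f: "f \<in> Fn n"
  show "psi n (psinv n f) c = f c"
  proof (cases "c \<in> Tn n")
    case True
    have "f c \<le> 2" using f True by (simp add: Fn_def)
    then show ?thesis using True by (auto simp: psi_def psinv_mem_T psinv_mem_F)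
  next
    case False then show ?thesis using f by (simp add: psi_def Fn_def)
  qed
qed

lemma psinv_down: "psinv n f \<in> downsets n"
  unfolding downsets_def
proof (intro CollectI conjI ballI impI)
  show "psinv n f \<subseteq> Pn n" unfolding psinv_def by blast
next
  fix a m assume a: "a \<in> psinv n f" and m: "m \<in> Pn n" and l: "leqn n m a"
  from a obtain c where c: "c \<in> Tn n" and aP: "a \<in> Pn n" and
    h: "(a = ch False c \<and> 1 \<le> f c) \<or> (a = ch True c \<and> 2 \<le> f c)"
    unfolding psinv_def by blast
  have n: "0 < n" using Tn_pos[OF c] .
  from leqn_char[OF m aP n] l have "m = a \<or> (\<exists>c'\<in>Tn n. m = ch False c' \<and> a = ch True c')" by blast
  then show "m \<in> psinv n f"
  proof
    assume "m = a" then show ?thesis using a by simp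
  next
    assume "\<exists>c'\<in>Tn n. m = ch False c' \<and> a = ch True c'"
    then obtain c' where c': "c' \<in> Tn n" "m = ch False c'" "a = ch True c'" by blast
    then have "c' = c \<and> 2 \<le> f c" using h ch_inj[OF c c'(1)] by metis
    then show ?thesis using c' psinv_mem_F by auto
  qed
qed

lemma psi_mono:
  assumes n: "0 < n" and A: "A \<in> downsets n" and B: "B \<in> downsets n"
  shows "A \<subseteq> B \<longleftrightarrow> (\<forall>c. psi n A c \<le> psi n B c)"
proof
  assume "A \<subseteq> B" then show "\<forall>c. psi n A c \<le> psi n B c"
    by (auto simp: psi_def)
next
  assume h: "\<forall>c. psi n A c \<le> psi n B c"
  show "A \<subseteq> B"
  proof
    fix z assume z: "z \<in> A"
    then have zP: "z \<in> Pn n" using downsets_Pn[OF A] by blast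
    then obtain c b where c: "c \<in> Tn n" "z = ch b c" using ch_surj n by blast
    have hc: "psi n A c \<le> psi n B c" using h by blast
    show "z \<in> B"
    proof (cases b)
      case True
      then show ?thesis using hc z c by (auto simp: psi_def split: if_splits)
    next
      case False
      then show ?thesis using hc z c down_step[OF B c(1)] by (auto simp: psi_def split: if_splits)
    qed
  qed
qed


lemma take_snoc: "length m = n \<Longrightarrow> take n (m @ [i]) = m" by simp

lemma take_Pn: "a \<in> Pn (Suc n) \<Longrightarrow> take n a \<in> Pn n"
proof -
  assume "a \<in> Pn (Suc n)"
  then obtain m i where "a = m@[i]" "m \<in> Pn n" by (metis Pn_Suc)
  then show ?thesis using Pn_len by simp
qed

lemma take_decomp: "a \<in> Pn (Suc n) \<Longrightarrow> \<exists>i<4. a = take n a @ [i]"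
proof -
  assume "a \<in> Pn (Suc n)"
  then obtain m i where "a = m@[i]" "m \<in> Pn n" "i < 4" by (metis Pn_Suc)
  then show ?thesis using Pn_len by auto
qed

lemma take_mono: "c \<in> Tn (Suc n) \<Longrightarrow> leqn n (take n (ch False c)) (take n (ch True c))"
proof (cases "n = 0")
  case True then show ?thesis by (simp add: leqn_refl)
next
  case False
  assume c: "c \<in> Tn (Suc n)"
  have n: "0 < n" using False by simp
  obtain d k where d: "c = d@[k]" "d \<in> Tn n" "k < 4" using Tn_Suc[OF n c] by blast
  have ne: "d \<noteq> []" using d(2) by (auto simp: Tn_def Pn_def)
  have ld: "length (ch b d) = n" for b using Pn_len[OF Tn_Pn[OF d(2)]] by simp
  show ?thesis
  proof (cases "k < 2")
    case True
    then show ?thesis using d ne ld low_le_up[OF d(2)] by (simp add: ch_snoc)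
  next
    case False
    then show ?thesis using d ne ld by (simp add: ch_snoc leqn_refl)
  qed
qed

lemma hatp_char:
  assumes A: "A \<in> downsets (Suc n)"
  shows "hatp n A = {m \<in> Pn n. \<exists>a\<in>A. leqn n m (take n a)}"
proof
  show "hatp n A \<subseteq> {m \<in> Pn n. \<exists>a\<in>A. leqn n m (take n a)}"
    unfolding hatp_def downarrow_def maxels_def by blast
next
  show "{m \<in> Pn n. \<exists>a\<in>A. leqn n m (take n a)} \<subseteq> hatp n A"
  proof
    fix m assume "m \<in> {m \<in> Pn n. \<exists>a\<in>A. leqn n m (take n a)}"
    then obtain a where m: "m \<in> Pn n" and a: "a \<in> A" and l: "leqn n m (take n a)" by blast
    have AP: "A \<subseteq> Pn (Suc n)" using downsets_Pn[OF A] .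
    show "m \<in> hatp n A"
    proof (cases "a \<in> maxels (Suc n) A")
      case True
      then show ?thesis using m l unfolding hatp_def downarrow_def by blast
    next
      case False
      then obtain b where b: "b \<in> A" "leqn (Suc n) a b" "b \<noteq> a" using a unfolding maxels_def by blast
      have "a = b \<or> (\<exists>c\<in>Tn (Suc n). a = ch False c \<and> b = ch True c)"
        using leqn_char[of a "Suc n" b] AP a b by blast
      then obtain c where c: "c \<in> Tn (Suc n)" "a = ch False c" "b = ch True c" using b(3) by blast
      have bmax: "b \<in> maxels (Suc n) A"
        unfolding maxels_def using up_max[OF c(1)] AP b(1) c(3) by blast
      have "leqn n m (take n b)"
        using leqn_trans[OF m take_Pn take_Pn l] take_mono[OF c(1)] AP a b c by blast
      then show ?thesis using bmax m unfolding hatp_def downarrow_def by blast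
    qed
  qed
qed

lemma hatp_down:
  assumes A: "A \<in> downsets (Suc n)"
  shows "hatp n A \<in> downsets n"
  unfolding hatp_char[OF A] downsets_def
proof (rule CollectI, intro conjI ballI impI)
  show "{m \<in> Pn n. \<exists>a\<in>A. leqn n m (take n a)} \<subseteq> Pn n" by blast
next
  fix x m assume x: "x \<in> {m \<in> Pn n. \<exists>a\<in>A. leqn n m (take n a)}" and m: "m \<in> Pn n" and l: "leqn n m x"
  from x obtain a where a: "a \<in> A" "leqn n x (take n a)" and xP: "x \<in> Pn n" by blast
  have "take n a \<in> Pn n" using take_Pn downsets_Pn[OF A] a(1) by blast
  then have "leqn n m (take n a)" using leqn_trans[OF m xP _ l a(2)] by blast
  then show "m \<in> {m \<in> Pn n. \<exists>a\<in>A. leqn n m (take n a)}" using m a(1) by blast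
qed

lemma hatp_mono:
  assumes A: "A \<in> downsets (Suc n)" and B: "B \<in> downsets (Suc n)" and "A \<subseteq> B"
  shows "hatp n A \<subseteq> hatp n B"
  using assms unfolding hatp_char[OF A] hatp_char[OF B] by blast


lemma ex4: "(\<exists>i<(4::nat). P i) \<longleftrightarrow> P 0 \<or> P 1 \<or> P 2 \<or> P 3"
proof
  assume "\<exists>i<4. P i"
  then obtain i where "i < 4" "P i" by blast
  moreover have "i = 0 \<or> i = 1 \<or> i = 2 \<or> i = 3" using \<open>i < 4\<close> by arith
  ultimately show "P 0 \<or> P 1 \<or> P 2 \<or> P 3" by auto
next
  assume "P 0 \<or> P 1 \<or> P 2 \<or> P 3"
  then show "\<exists>i<4. P i"
  proof (elim disjE)
    assume "P 0" then show ?thesis by (intro exI[of _ 0]) simp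
  next
    assume "P 1" then show ?thesis by (intro exI[of _ 1]) simp
  next
    assume "P 2" then show ?thesis by (intro exI[of _ 2]) simp
  next
    assume "P 3" then show ?thesis by (intro exI[of _ 3]) simp
  qed
qed

lemma combi:
  fixes u0 u1 u2 u3 l0 l1 l2 l3 :: bool
  assumes "u0 \<longrightarrow> l0" "u1 \<longrightarrow> l1" "u3 \<longrightarrow> u2" "l3 \<longrightarrow> l2"
  shows "(if (u0 \<or> u1 \<or> u2 \<or> u3) then (2::nat) else if ((l0 \<or> u0) \<or> (l1 \<or> u1) \<or> (l2 \<or> u2) \<or> l3 \<or> u3) then 1 else 0)
   = max (max (if u0 then 2 else if l0 then 1 else 0) (if u1 then 2 else if l1 then 1 else 0))
         (max (min (if l3 then 2 else if l2 then 1 else 0) 1) (2 * min (if u3 then 2 else if u2 then 1 else 0) 1))"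
  using assms by (cases u0; cases u1; cases u2; cases u3; cases l0; cases l1; cases l2; cases l3; simp)

lemma psi_hatp:
  assumes A: "A \<in> downsets (Suc n)"
  shows "psi n (hatp n A) = q n (psi (Suc n) A)"
proof
  fix c
  show "psi n (hatp n A) c = q n (psi (Suc n) A) c"
  proof (cases "c \<in> Tn n")
    case False then show ?thesis by (simp add: psi_def q_def)
  next
    case True
    have c: "c \<in> Tn n" by fact
    have n: "0 < n" using Tn_pos[OF c] .
    have ne: "c \<noteq> []" using c by (auto simp: Tn_def Pn_def)
    define u where "u = ch True c"
    define l where "l = ch False c"
    have uP: "u \<in> Pn n" and lP: "l \<in> Pn n" using ch_Pn[OF c] by (simp_all add: u_def l_def)
    have lu: "length u = n" "length l = n" using Pn_len uP lP by auto
    have AP: "A \<subseteq> Pn (Suc n)" using downsets_Pn[OF A] .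
    have U: "u \<in> hatp n A \<longleftrightarrow> (\<exists>i<4. u@[i] \<in> A)"
    proof
      assume "u \<in> hatp n A"
      then obtain a where a: "a \<in> A" "leqn n u (take n a)" unfolding hatp_char[OF A] by blast
      have "take n a = u" using up_max[OF c take_Pn] a AP unfolding u_def by blast
      moreover have aP: "a \<in> Pn (Suc n)" using a AP by blast
      moreover obtain i where i: "i<4" "a = take n a @ [i]" using take_decomp[OF aP] by blast
      ultimately have "u@[i] \<in> A" using a(1) by metis
      then show "\<exists>i<4. u@[i] \<in> A" using i by blast
    next
      assume "\<exists>i<4. u@[i] \<in> A"
      then obtain i where "u@[i] \<in> A" by blast
      then show "u \<in> hatp n A" unfolding hatp_char[OF A] using uP lu leqn_refl[of n u] by force
    qed
    have L: "l \<in> hatp n A \<longleftrightarrow> (\<exists>i<4. l@[i] \<in> A \<or> u@[i] \<in> A)"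
    proof
      assume "l \<in> hatp n A"
      then obtain a where a: "a \<in> A" "leqn n l (take n a)" unfolding hatp_char[OF A] by blast
      have "take n a = l \<or> take n a = u" using low_up[OF c take_Pn] a AP unfolding u_def l_def by blast
      moreover have aP: "a \<in> Pn (Suc n)" using a AP by blast
      moreover obtain i where i: "i<4" "a = take n a @ [i]" using take_decomp[OF aP] by blast
      ultimately have "l@[i] \<in> A \<or> u@[i] \<in> A" using a(1) by metis
      then show "\<exists>i<4. l@[i] \<in> A \<or> u@[i] \<in> A" using i by blast
    next
      assume "\<exists>i<4. l@[i] \<in> A \<or> u@[i] \<in> A"
      then obtain i where "l@[i] \<in> A \<or> u@[i] \<in> A" by blast
      moreover have "leqn n l u" using low_le_up[OF c] unfolding u_def l_def .
      ultimately show "l \<in> hatp n A" unfolding hatp_char[OF A] using lP lu leqn_refl[of n l] by force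
    qed
    have T: "c@[i] \<in> Tn (Suc n)" if "i < 4" for i using Tn_snoc[OF n] c that by simp
    have s0: "ch True (c@[0]) = u@[0]" "ch False (c@[0]) = l@[0]" using ne by (simp_all add: ch_snoc u_def l_def)
    have s1: "ch True (c@[1]) = u@[1]" "ch False (c@[1]) = l@[1]" using ne by (simp_all add: ch_snoc u_def l_def)
    have s2: "ch True (c@[2]) = l@[3]" "ch False (c@[2]) = l@[2]" using ne by (simp_all add: ch_snoc u_def l_def)
    have s3: "ch True (c@[3]) = u@[3]" "ch False (c@[3]) = u@[2]" using ne by (simp_all add: ch_snoc u_def l_def)
    have d0: "u@[0] \<in> A \<longrightarrow> l@[0] \<in> A" using down_step[OF A T[of 0]] s0 by simp
    have d1: "u@[1] \<in> A \<longrightarrow> l@[1] \<in> A" using down_step[OF A T[of 1]] s1 by simp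
    have d2: "l@[3] \<in> A \<longrightarrow> l@[2] \<in> A" using down_step[OF A T[of 2]] s2 by simp
    have d3: "u@[3] \<in> A \<longrightarrow> u@[2] \<in> A" using down_step[OF A T[of 3]] s3 by simp
    have p0: "psi (Suc n) A (c@[0]) = (if u@[0] \<in> A then 2 else if l@[0] \<in> A then 1 else 0)"
      using T[of 0] s0 by (simp add: psi_def)
    have p1: "psi (Suc n) A (c@[1]) = (if u@[1] \<in> A then 2 else if l@[1] \<in> A then 1 else 0)"
      using T[of 1] s1 by (simp add: psi_def)
    have p2: "psi (Suc n) A (c@[2]) = (if l@[3] \<in> A then 2 else if l@[2] \<in> A then 1 else 0)"
      using T[of 2] s2 by (simp add: psi_def)
    have p3: "psi (Suc n) A (c@[3]) = (if u@[3] \<in> A then 2 else if u@[2] \<in> A then 1 else 0)"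
      using T[of 3] s3 by (simp add: psi_def)
    have lhs: "psi n (hatp n A) c = (if u \<in> hatp n A then 2 else if l \<in> hatp n A then 1 else 0)"
      using c by (simp add: psi_def u_def l_def)
    have rhs: "q n (psi (Suc n) A) c = max (max (psi (Suc n) A (c@[0])) (psi (Suc n) A (c@[1])))
          (max (min (psi (Suc n) A (c@[2])) 1) (2 * min (psi (Suc n) A (c@[3])) 1))"
      using c by (simp add: q_def)
    show ?thesis
      unfolding lhs rhs p0 p1 p2 p3 U L ex4
      by (rule combi[OF d0 d1 d3 d2])
  qed
qed


theorem mainTheorem19:
  shows "\<exists>\<Phi>. bij_betw \<Phi> OP Lq \<and>
    (\<forall>A\<in>OP. \<forall>B\<in>OP. (\<forall>n. A n \<subseteq> B n) \<longleftrightarrow> (\<forall>n c. \<Phi> A n c \<le> \<Phi> B n c))"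
proof -
  define \<Phi> :: "(nat \<Rightarrow> nat list set) \<Rightarrow> nat \<Rightarrow> nat list \<Rightarrow> nat" where "\<Phi> = (\<lambda>A n. psi n (A n))"
  have OPd: "A n \<in> downsets n" if "A \<in> OP" for A n using that by (simp add: OP_def)
  have OPh: "hatp n (A (Suc n)) = A n" if "A \<in> OP" for A n using that by (simp add: OP_def)
  have psi0: "psi 0 X = (\<lambda>c. 0)" for X by (simp add: psi_def Tn_0 fun_eq_iff)
  have F0: "f = (\<lambda>c. 0)" if "f \<in> Fn 0" for f using that by (auto simp: Fn_def Tn_0)
  have img: "\<Phi> ` OP \<subseteq> Lq"
  proof
    fix G assume "G \<in> \<Phi> ` OP"
    then obtain A where A: "A \<in> OP" and G: "G = \<Phi> A" by blast
    have "q n (psi (Suc n) (A (Suc n))) = psi n (A n)" for n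
      using psi_hatp[OF OPd[OF A, of "Suc n"]] OPh[OF A, of n] by simp
    then show "G \<in> Lq" unfolding Lq_def G \<Phi>_def using psi_Fn by simp
  qed
  have inj: "inj_on \<Phi> OP"
  proof (rule inj_onI)
    fix A B assume A: "A \<in> OP" and B: "B \<in> OP" and e: "\<Phi> A = \<Phi> B"
    have p: "psi n (A n) = psi n (B n)" for n using e unfolding \<Phi>_def by metis
    have pos: "A n = B n" if "0 < n" for n
      using psinv_psi[OF that OPd[OF A]] psinv_psi[OF that OPd[OF B]] p by metis
    show "A = B"
    proof
      fix n show "A n = B n"
      proof (cases "n = 0")
        case True
        have "A (Suc 0) = B (Suc 0)" using pos by simp
        then show ?thesis using OPh[OF A, of 0] OPh[OF B, of 0] True by simp
      next
        case False then show ?thesis using pos by simp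
      qed
    qed
  qed
  have surj: "Lq \<subseteq> \<Phi> ` OP"
  proof
    fix F assume F: "F \<in> Lq"
    have FF: "F n \<in> Fn n" for n using F by (simp add: Lq_def)
    have Fq: "q n (F (Suc n)) = F n" for n using F by (simp add: Lq_def)
    define A where "A = (\<lambda>n. if n = 0 then hatp 0 (psinv 1 (F 1)) else psinv n (F n))"
    have Ad: "A n \<in> downsets n" for n
    proof (cases "n = 0")
      case True then show ?thesis using hatp_down[OF psinv_down] by (simp add: A_def)
    next
      case False then show ?thesis using psinv_down by (simp add: A_def)
    qed
    have Ah: "hatp n (A (Suc n)) = A n" for n
    proof (cases "n = 0")
      case True then show ?thesis by (simp add: A_def)
    next
      case False
      then have n: "0 < n" by simp
      have AS: "A (Suc n) = psinv (Suc n) (F (Suc n))" by (simp add: A_def)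
      have X: "hatp n (A (Suc n)) \<in> downsets n" using hatp_down[OF Ad] .
      have "psi n (hatp n (A (Suc n))) = F n"
        using psi_hatp[OF Ad[of "Suc n"]] AS psi_psinv[OF FF] Fq by simp
      then have "hatp n (A (Suc n)) = psinv n (F n)" using psinv_psi[OF n X] by simp
      then show ?thesis using False by (simp add: A_def)
    qed
    have AOP: "A \<in> OP" unfolding OP_def using Ad Ah by simp
    have "\<Phi> A = F"
    proof
      fix n show "\<Phi> A n = F n"
      proof (cases "n = 0")
        case True then show ?thesis using psi0 F0[OF FF[of 0]] by (simp add: \<Phi>_def)
      next
        case False then show ?thesis using psi_psinv[OF FF] by (simp add: \<Phi>_def A_def)
      qed
    qed
    then show "F \<in> \<Phi> ` OP" using AOP by blast
  qed
  have ord: "(\<forall>n. A n \<subseteq> B n) \<longleftrightarrow> (\<forall>n c. \<Phi> A n c \<le> \<Phi> B n c)" if A: "A \<in> OP" and B: "B \<in> OP" for A B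
  proof
    assume h: "\<forall>n. A n \<subseteq> B n"
    show "\<forall>n c. \<Phi> A n c \<le> \<Phi> B n c"
    proof (intro allI)
      fix n c show "\<Phi> A n c \<le> \<Phi> B n c"
      proof (cases "n = 0")
        case True then show ?thesis by (simp add: \<Phi>_def psi0)
      next
        case False
        then show ?thesis using psi_mono[of n "A n" "B n"] OPd[OF A] OPd[OF B] h by (simp add: \<Phi>_def)
      qed
    qed
  next
    assume h: "\<forall>n c. \<Phi> A n c \<le> \<Phi> B n c"
    have pos: "A n \<subseteq> B n" if "0 < n" for n
      using psi_mono[OF that OPd[OF A] OPd[OF B]] h by (simp add: \<Phi>_def)
    show "\<forall>n. A n \<subseteq> B n"
    proof
      fix n show "A n \<subseteq> B n"
      proof (cases "n = 0")
        case True
        have "hatp 0 (A (Suc 0)) \<subseteq> hatp 0 (B (Suc 0))"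
          using hatp_mono[OF OPd[OF A] OPd[OF B] pos] by simp
        then show ?thesis using OPh[OF A, of 0] OPh[OF B, of 0] True by simp
      next
        case False then show ?thesis using pos by simp
      qed
    qed
  qed
  have "\<Phi> ` OP = Lq" using img surj by (rule subset_antisym)
  then have bij: "bij_betw \<Phi> OP Lq" using inj unfolding bij_betw_def by simp
  show ?thesis
  proof (intro exI[of _ \<Phi>] conjI ballI)
    show "bij_betw \<Phi> OP Lq" by (rule bij)
  next
    fix A B assume "A \<in> OP" "B \<in> OP"
    then show "(\<forall>n. A n \<subseteq> B n) \<longleftrightarrow> (\<forall>n c. \<Phi> A n c \<le> \<Phi> B n c)" by (rule ord)
  qed
qed

end
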